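(* Fix $x_0\in\mathbb{R}^{n_x}$. There exist a finite positive constant $\alpha_1(x_0)$ and, for each $i\in\{2,\dots,T\}$, a finite set $\mathcal{K}_i$ of sequences of non-negative integers of length $i-1$ and finite positive constants $\alpha_i^{(j_1,\dots,j_{i-1})}(x_0)$ (depending on $x_0$ and $(j_1,\dots,j_{i-1})$ but not on the observations or the control) such that for every control $u\in U$ and every sequence of observations $(y_1,\dots,y_T)$, the solution of the hybrid system starting at $x_0$ satisfies $\|x_1(t)\|_2\le\alpha_1(x_0)$ for all $t\in[0,1]$, and for all $i\in\{2,\dots,T\}$ and $t\in[i-1,i]$, $$\|x_i(t)\|_2\le\sum_{(j_1,\dots,j_{i-1})\in\mathcal{K}_i}\alpha_i^{(j_1,\dots,j_{i-1})}(x_0)\prod_{m=1}^{i-1}\|y_m\|_2^{j_m}.$$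
   Context: Fix positive integers $T,m,n_x,n_y$ and $\rho_{\max}\in(0,\infty)$; $B(0,\rho_{\max})$ is the closed Euclidean ball of radius $\rho_{\max}$ in $\mathbb{R}^m$; $U$ is the set of piecewise continuous $u:[0,T]\to\mathbb{R}^m$ with $\|u(t)\|_2\le\rho_{\max}$ for all $t$. $f:\mathbb{R}^{n_x}\times\mathbb{R}^m\to\mathbb{R}^{n_x}$ is continuously differentiable and there is $K_1\in[1,\infty)$ with $\|f(x',u')-f(x'',u'')\|_2\le K_1(\|x'-x''\|_2+\|u'-u''\|_2)$ for all $x',x''\in\mathbb{R}^{n_x}$, $u',u''\in B(0,\rho_{\max})$. $g:\mathbb{R}^{n_x}\times\mathbb{R}^{n_y}\to\mathbb{R}^{n_x}$ is continuous and differentiable in its first argument, and there are $K_2,\dots,K_5\ge0$ and positive integers $L_1,L_2$ such that for all $x,y$ both $\|g(x,y)\|_2$ and $\|\frac{\partial}{\partial x}g(x,y)\|_2$ are at most $K_2+K_3\|x\|_2^{L_1}+K_4\|y\|_2^{L_2}+K_5\|x\|_2^{L_1}\|y\|_2^{L_2}$. The hybrid system: $x_1$ on $[0,1]$ solves $\dot x_1=f(x_1,u)$, $x_1(0)=x_0$; for $i=2,\dots,T$, $x_i$ on $[i-1,i]$ solves $\dot x_i(t)=f(x_i(t),u(t))$ with $x_i(i-1)=g(x_{i-1}(i-1),y_{i-1})$; $x(t)=x_i(t)$ for $t\in[i-1,i)$, and $x(T)=g(x_T(T),y_T)$. *)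

theory Defs
  imports "HOL-Analysis.Analysis"
begin

definition piecewise_continuous_on :: "real \<Rightarrow> real \<Rightarrow> (real \<Rightarrow> 'a::topological_space) \<Rightarrow> bool" where
  "piecewise_continuous_on a b u \<longleftrightarrow>
     (\<exists>S. finite S \<and>
        (\<forall>t\<in>{a..b} - S. continuous (at t within {a..b}) u) \<and>
        (\<forall>t\<in>S \<inter> {a..b}.
           (t > a \<longrightarrow> (\<exists>l. (u \<longlongrightarrow> l) (at_left t))) \<and>
           (t < b \<longrightarrow> (\<exists>l. (u \<longlongrightarrow> l) (at_right t)))))"

definition admissible_controls :: "nat \<Rightarrow> real \<Rightarrow> (real \<Rightarrow> 'u::euclidean_space) set" where
  "admissible_controls T \<rho> =
     {u. piecewise_continuous_on 0 (real T) u \<and> (\<forall>t\<in>{0..real T}. norm (u t) \<le> \<rho>)}"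

text \<open>x solves x' = f(x,u) on [a,b] (in the Caratheodory / integral sense) with initial value x a = x0.\<close>
definition solves_on :: "('x::euclidean_space \<Rightarrow> 'u \<Rightarrow> 'x) \<Rightarrow> (real \<Rightarrow> 'u) \<Rightarrow> real \<Rightarrow> real \<Rightarrow> 'x \<Rightarrow> (real \<Rightarrow> 'x) \<Rightarrow> bool" where
  "solves_on f u a b x0 x \<longleftrightarrow>
     x a = x0 \<and> continuous_on {a..b} x \<and>
     (\<forall>t\<in>{a..b}. ((\<lambda>s. f (x s) (u s)) has_integral (x t - x a)) {a..t})"

text \<open>The hybrid system: xs i is the i-th arc on [i-1,i], i = 1..T.\<close>
definition hybrid_solution ::
  "('x::euclidean_space \<Rightarrow> 'u \<Rightarrow> 'x) \<Rightarrow> ('x \<Rightarrow> 'y \<Rightarrow> 'x) \<Rightarrow> nat \<Rightarrow> 'x \<Rightarrow> (real \<Rightarrow> 'u)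
     \<Rightarrow> (nat \<Rightarrow> 'y) \<Rightarrow> (nat \<Rightarrow> real \<Rightarrow> 'x) \<Rightarrow> bool" where
  "hybrid_solution f g T x0 u y xs \<longleftrightarrow>
     solves_on f u 0 1 x0 (xs 1) \<and>
     (\<forall>i\<in>{2..T}. solves_on f u (real i - 1) (real i)
                   (g (xs (i - 1) (real i - 1)) (y (i - 1))) (xs i))"

end

theory Submission
  imports Defs
begin



lemma gronwall1:
  fixes w :: "real \<Rightarrow> real"
  assumes cont: "continuous_on {a..b} w" and K: "K \<ge> 0"
    and le: "\<And>t. t \<in> {a..b} \<Longrightarrow> w t \<le> B + K * integral {a..t} w"
    and t: "t \<in> {a..b}"
  shows "w t \<le> B * exp (K * (t - a))"
proof -
  define \<psi> where "\<psi> s = exp (- K * (s - a)) * (B + K * integral {a..s} w)" for s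
  have der: "(\<psi> has_real_derivative (K * exp (- K * (s - a)) * (w s - B - K * integral {a..s} w))) (at s within {a..b})"
    if "s \<in> {a..b}" for s
    unfolding \<psi>_def
    by (rule derivative_eq_intros integral_has_real_derivative[OF cont that] | simp)+
       (simp add: algebra_simps)
  have "\<psi> t \<le> \<psi> a"
  proof (rule DERIV_nonpos_imp_decreasing_open[of a t \<psi>])
    show "a \<le> t" using t by simp
    fix s assume s: "a < s" "s < t"
    have "at s within {a..b} = at s" using s t by (intro at_within_Icc_at) auto
    with der[of s] s t have "(\<psi> has_real_derivative (K * exp (- K * (s - a)) * (w s - B - K * integral {a..s} w))) (at s)"
      by auto
    moreover have "K * exp (- K * (s - a)) * (w s - B - K * integral {a..s} w) \<le> 0"
      using le[of s] s t K by (intro mult_nonneg_nonpos) auto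
    ultimately show "\<exists>y. (\<psi> has_real_derivative y) (at s) \<and> y \<le> 0" by blast
  next
    have "continuous_on {a..b} \<psi>"
      using der by (intro has_derivative_continuous_on) (auto simp: has_field_derivative_def)
    then show "continuous_on {a..t} \<psi>" by (rule continuous_on_subset) (use t in auto)
  qed
  also have "\<psi> a = B" by (simp add: \<psi>_def)
  finally have psi_le: "exp (- K * (t - a)) * (B + K * integral {a..t} w) \<le> B" by (simp add: \<psi>_def)
  then have "B + K * integral {a..t} w \<le> B * exp (K * (t - a))"
  proof -
    let ?E = "exp (K * (t - a))"
    have "exp (- K * (t - a)) * (B + K * integral {a..t} w) * ?E \<le> B * ?E"
      using psi_le by (intro mult_right_mono) auto
    moreover have "exp (- K * (t - a)) * ?E = 1" by (simp add: exp_add[symmetric])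
    ultimately show ?thesis by (simp add: algebra_simps)
  qed
  with le[OF t] show ?thesis by linarith
qed

lemma ode_bound:
  fixes f :: "'x::euclidean_space \<Rightarrow> 'u::euclidean_space \<Rightarrow> 'x"
  assumes sol: "solves_on f u a b z x" and ab: "b = a + 1"
    and ub: "\<And>s. s \<in> {a..b} \<Longrightarrow> norm (u s) \<le> \<rho>" and rho: "\<rho> \<ge> 0" and K1: "K1 \<ge> 0"
    and lip: "\<And>x1 x2 v1 v2. norm v1 \<le> \<rho> \<Longrightarrow> norm v2 \<le> \<rho> \<Longrightarrow>
                 norm (f x1 v1 - f x2 v2) \<le> K1 * (norm (x1 - x2) + norm (v1 - v2))"
    and t: "t \<in> {a..b}"
  shows "norm (x t) \<le> (norm z + (norm (f 0 0) + K1 * \<rho>)) * exp K1"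
proof -
  define C where "C = norm (f 0 0) + K1 * \<rho>"
  have C0: "C \<ge> 0" using rho K1 by (simp add: C_def)
  have xa: "x a = z" and xc: "continuous_on {a..b} x"
    and hi: "\<And>t. t \<in> {a..b} \<Longrightarrow> ((\<lambda>s. f (x s) (u s)) has_integral (x t - x a)) {a..t}"
    using sol unfolding solves_on_def by auto
  have wc: "continuous_on {a..b} (\<lambda>s. norm (x s))" using xc by (intro continuous_intros)
  have fb: "norm (f (x s) (u s)) \<le> C + K1 * norm (x s)" if "s \<in> {a..b}" for s
  proof -
    have "norm (f (x s) (u s) - f 0 0) \<le> K1 * (norm (x s - 0) + norm (u s - 0))"
      using lip[of "u s" 0 "x s" 0] ub[OF that] rho by simp
    also have "\<dots> \<le> K1 * norm (x s) + K1 * \<rho>"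
      using ub[OF that] K1 by (simp add: algebra_simps mult_left_mono)
    finally show ?thesis unfolding C_def using norm_triangle_ineq2[of "f (x s) (u s)" "f 0 0"] by linarith
  qed
  have key: "norm (x s) \<le> (norm z + C) + K1 * integral {a..s} (\<lambda>s. norm (x s))" if s: "s \<in> {a..b}" for s
  proof -
    have sub: "{a..s} \<subseteq> {a..b}" using s by auto
    have wcs: "continuous_on {a..s} (\<lambda>s. norm (x s))" using wc sub by (rule continuous_on_subset)
    have int1: "(\<lambda>s. f (x s) (u s)) integrable_on {a..s}" using hi[OF s] by blast
    have eq1: "integral {a..s} (\<lambda>s. f (x s) (u s)) = x s - z" using hi[OF s] xa by (simp add: integral_unique)
    have wi: "(\<lambda>s. norm (x s)) integrable_on {a..s}" using wcs by (rule integrable_continuous_real)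
    have gi: "(\<lambda>r. C + K1 * norm (x r)) integrable_on {a..s}"
      using wi by (intro integrable_add integrable_on_mult_right integrable_const_ivl) auto
    have "norm (x s - z) \<le> integral {a..s} (\<lambda>r. C + K1 * norm (x r))"
      unfolding eq1[symmetric]
      by (rule integral_norm_bound_integral[OF int1 gi]) (use sub fb in auto)
    also have "\<dots> = C * (s - a) + K1 * integral {a..s} (\<lambda>r. norm (x r))"
      using wi s by (subst integral_add) (auto simp: integrable_on_mult_right)
    also have "\<dots> \<le> C + K1 * integral {a..s} (\<lambda>r. norm (x r))"
      using s ab C0 by (simp add: mult_left_le)
    finally show ?thesis using norm_triangle_ineq2[of "x s" z] by linarith
  qed
  have "norm (x t) \<le> (norm z + C) * exp (K1 * (t - a))"
    by (rule gronwall1[OF wc K1 key t])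
  also have "\<dots> \<le> (norm z + C) * exp K1"
    using t ab C0 K1 by (intro mult_left_mono) (auto simp: mult_left_le)
  finally show ?thesis by (simp add: C_def)
qed


fun ccf :: "real \<Rightarrow> real \<Rightarrow> real \<Rightarrow> real \<Rightarrow> nat \<Rightarrow> nat \<Rightarrow> real" where
  "ccf c0 D C A L 0 = c0"
| "ccf c0 D C A L (Suc n) = max 1 ((D * ccf c0 D C A L n ^ L + C) * A)"

fun EEf :: "nat \<Rightarrow> nat \<Rightarrow> nat \<Rightarrow> nat" where
  "EEf L1 L2 0 = 0"
| "EEf L1 L2 (Suc n) = EEf L1 L2 n * L1 + L2"

lemma ccf_ge1: "c0 \<ge> 1 \<Longrightarrow> ccf c0 D C A L n \<ge> 1"
  by (cases n) auto

theorem proposition6: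
  fixes f :: "'x::euclidean_space \<Rightarrow> 'u::euclidean_space \<Rightarrow> 'x"
    and g :: "'x \<Rightarrow> 'y::euclidean_space \<Rightarrow> 'x"
    and g' :: "'x \<Rightarrow> 'y \<Rightarrow> ('x \<Rightarrow>\<^sub>L 'x)"
    and T :: nat and \<rho> K1 K2 K3 K4 K5 :: real and L1 L2 :: nat and x0 :: 'x
  assumes T_pos: "T \<ge> 1"
    and \<rho>_pos: "0 < \<rho>"
    and f_C1: "\<exists>f' :: 'x \<times> 'u \<Rightarrow> (('x \<times> 'u) \<Rightarrow>\<^sub>L 'x).
                 (\<forall>p. ((\<lambda>(x, v). f x v) has_derivative blinfun_apply (f' p)) (at p))
                 \<and> continuous_on UNIV f'"
    and K1: "K1 \<ge> 1"
    and f_lip: "\<And>x1 x2 v1 v2. norm v1 \<le> \<rho> \<Longrightarrow> norm v2 \<le> \<rho> \<Longrightarrow>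
                 norm (f x1 v1 - f x2 v2) \<le> K1 * (norm (x1 - x2) + norm (v1 - v2))"
    and g_cont: "continuous_on UNIV (\<lambda>(x, y). g x y)"
    and g_diff: "\<And>x y. ((\<lambda>z. g z y) has_derivative blinfun_apply (g' x y)) (at x)"
    and K_nonneg: "K2 \<ge> 0" "K3 \<ge> 0" "K4 \<ge> 0" "K5 \<ge> 0"
    and L_pos: "L1 \<ge> 1" "L2 \<ge> 1"
    and g_bound: "\<And>x y. norm (g x y) \<le>
                   K2 + K3 * norm x ^ L1 + K4 * norm y ^ L2 + K5 * norm x ^ L1 * norm y ^ L2"
    and g'_bound: "\<And>x y. norm (g' x y) \<le>
                   K2 + K3 * norm x ^ L1 + K4 * norm y ^ L2 + K5 * norm x ^ L1 * norm y ^ L2"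
  shows "\<exists>(\<alpha>1::real) (\<K>::nat \<Rightarrow> nat list set) (\<alpha>::nat \<Rightarrow> nat list \<Rightarrow> real).
           0 < \<alpha>1 \<and>
           (\<forall>i\<in>{2..T}. finite (\<K> i) \<and> (\<forall>js\<in>\<K> i. length js = i - 1 \<and> 0 < \<alpha> i js)) \<and>
           (\<forall>u\<in>admissible_controls T \<rho>. \<forall>(y::nat \<Rightarrow> 'y) xs.
              hybrid_solution f g T x0 u y xs \<longrightarrow>
                (\<forall>t\<in>{0..1}. norm (xs 1 t) \<le> \<alpha>1) \<and>
                (\<forall>i\<in>{2..T}. \<forall>t\<in>{real i - 1..real i}.
                   norm (xs i t) \<le>
                     (\<Sum>js\<in>\<K> i. \<alpha> i js * (\<Prod>m\<in>{1..i - 1}. norm (y m) ^ (js ! (m - 1))))))"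
proof -
  define C where "C = norm (f 0 0) + K1 * \<rho>"
  define D where "D = K2 + K3 + K4 + K5"
  define A where "A = exp K1"
  define c0 where "c0 = max 1 ((norm x0 + C) * A)"
  define cc where "cc = ccf c0 D C A L1"
  define EE where "EE = EEf L1 L2"
  define P where "P y i = (\<Prod>m\<in>{1..i - 1}. max 1 (norm (y m)))" for y :: "nat \<Rightarrow> 'y" and i
  have C0: "C \<ge> 0" using \<rho>_pos K1 by (simp add: C_def)
  have D0: "D \<ge> 0" using K_nonneg by (simp add: D_def)
  have A0: "A > 0" by (simp add: A_def)
  have cc1: "cc n \<ge> 1" for n unfolding cc_def by (rule ccf_ge1) (simp add: c0_def)
  have P1: "P y i \<ge> 1" for y i unfolding P_def by (rule prod_ge_1) simp
  have main: "\<forall>t\<in>{real n..real n + 1}. norm (xs (Suc n) t) \<le> cc n * P y (Suc n) ^ EE n"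
    if u: "u \<in> admissible_controls T \<rho>" and hs: "hybrid_solution f g T x0 u y xs"
      and n: "Suc n \<le> T" for u y xs n
    using n
  proof (induction n)
    case 0
    have sol: "solves_on f u 0 1 x0 (xs 1)" using hs by (simp add: hybrid_solution_def)
    show ?case
    proof
      fix t :: real assume t: "t \<in> {real 0..real 0 + 1}"
      have "norm (xs 1 t) \<le> (norm x0 + (norm (f 0 0) + K1 * \<rho>)) * exp K1"
        by (rule ode_bound[OF sol _ _ _ _ f_lip]) (use u T_pos t \<rho>_pos K1 in \<open>auto simp: admissible_controls_def\<close>)
      also have "\<dots> \<le> cc 0" by (simp add: cc_def c0_def C_def A_def)
      finally show "norm (xs (Suc 0) t) \<le> cc 0 * P y (Suc 0) ^ EE 0" by (simp add: EE_def)
    qed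
  next
    case (Suc n)
    have IH: "norm (xs (Suc n) (real (Suc n))) \<le> cc n * P y (Suc n) ^ EE n"
      using Suc by auto
    define z where "z = g (xs (Suc n) (real (Suc n))) (y (Suc n))"
    have sol: "solves_on f u (real (Suc (Suc n)) - 1) (real (Suc (Suc n))) z (xs (Suc (Suc n)))"
    proof -
      have "solves_on f u (real (Suc (Suc n)) - 1) (real (Suc (Suc n)))
          (g (xs (Suc (Suc n) - 1) (real (Suc (Suc n)) - 1)) (y (Suc (Suc n) - 1))) (xs (Suc (Suc n)))"
      proof -
        have mem: "Suc (Suc n) \<in> {2..T}" using Suc.prems by auto
        show ?thesis using hs mem unfolding hybrid_solution_def by blast
      qed
      moreover have "real (Suc (Suc n)) - 1 = real (Suc n)" by simp
      ultimately show ?thesis unfolding z_def by (metis diff_Suc_1)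
    qed
    define c where "c = cc n"
    define Pp where "Pp = P y (Suc n)"
    define Pq where "Pq = P y (Suc (Suc n))"
    define E where "E = EE n"
    define E' where "E' = E * L1 + L2"
    define X where "X = norm (xs (Suc n) (real (Suc n)))"
    define a where "a = norm (y (Suc n))"
    have c1: "c \<ge> 1" using cc1 by (simp add: c_def)
    have Pp1: "Pp \<ge> 1" and Pq1: "Pq \<ge> 1" using P1 by (auto simp: Pp_def Pq_def)
    have PqPp: "Pq = Pp * max 1 a" by (simp add: Pq_def Pp_def P_def a_def)
    have PpPq: "Pp \<le> Pq" using Pp1 by (simp add: PqPp)
    have aPq: "a \<le> Pq" using Pp1 PqPp
      by (metis max.cobounded2 max_def mult_1 mult_right_mono order.trans zero_le_one linorder_linear)
    have X0: "X \<ge> 0" by (simp add: X_def)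
    have XB: "X \<le> c * Pp ^ E" using IH by (simp add: X_def c_def Pp_def E_def)
    define Q where "Q = c ^ L1 * Pq ^ E'"
    have cL1: "c ^ L1 \<ge> 1" using c1 by simp
    have PqE: "Pq ^ n' \<ge> 1" for n' using Pq1 by simp
    have XL: "X ^ L1 \<le> c ^ L1 * Pq ^ (E * L1)"
    proof -
      have "X ^ L1 \<le> (c * Pp ^ E) ^ L1" using XB X0 by (rule power_mono)
      also have "\<dots> = c ^ L1 * Pp ^ (E * L1)" by (simp add: power_mult_distrib power_mult)
      also have "\<dots> \<le> c ^ L1 * Pq ^ (E * L1)"
        using PpPq Pp1 c1 by (intro mult_left_mono power_mono) auto
      finally show ?thesis .
    qed
    have aL: "a ^ L2 \<le> Pq ^ L2" using aPq by (intro power_mono) (auto simp: a_def)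
    have Qe: "Q = c ^ L1 * Pq ^ (E * L1) * Pq ^ L2" by (simp add: Q_def E'_def power_add)
    have Q1: "1 \<le> Q" using mult_mono[OF cL1 PqE[of E']] cL1 by (simp add: Q_def)
    have t1: "X ^ L1 \<le> Q" using XL PqE[of L2] cL1 PqE[of "E*L1"] unfolding Qe
      by (metis dual_order.trans mult_le_cancel_left1 mult_nonneg_nonneg less_le_not_le
          zero_le_one order.trans)
    have t2: "a ^ L2 \<le> Q" using aL cL1 PqE[of "E*L1"] PqE[of L2] unfolding Qe
      by (smt (verit) mult_le_cancel_right1 mult_nonneg_nonneg)
    have t3: "X ^ L1 * a ^ L2 \<le> Q" unfolding Qe
      by (rule mult_mono[OF XL aL]) (use PqE[of "E*L1"] cL1 a_def in \<open>auto intro!: mult_nonneg_nonneg order.trans[OF zero_le_one]\<close>)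
    have zb: "norm z \<le> D * Q"
    proof -
      have "norm z \<le> K2 + K3 * X ^ L1 + K4 * a ^ L2 + K5 * X ^ L1 * a ^ L2"
        using g_bound unfolding z_def X_def a_def by blast
      also have "\<dots> \<le> K2 * Q + K3 * Q + K4 * Q + K5 * Q"
      proof -
        have "K2 \<le> K2 * Q" using K_nonneg Q1 by (simp add: mult_le_cancel_left1)
        moreover have "K3 * X ^ L1 \<le> K3 * Q" using K_nonneg t1 by (simp add: mult_left_mono)
        moreover have "K4 * a ^ L2 \<le> K4 * Q" using K_nonneg t2 by (simp add: mult_left_mono)
        moreover have "K5 * X ^ L1 * a ^ L2 \<le> K5 * Q"
          using K_nonneg t3 mult_left_mono[OF t3, of K5] by (simp add: mult.assoc)
        ultimately show ?thesis by linarith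
      qed
      finally show ?thesis by (simp add: D_def algebra_simps)
    qed
    show ?case
    proof
      fix t :: real assume t: "t \<in> {real (Suc n)..real (Suc n) + 1}"
      have "norm (xs (Suc (Suc n)) t) \<le> (norm z + (norm (f 0 0) + K1 * \<rho>)) * exp K1"
        by (rule ode_bound[OF sol _ _ _ _ f_lip]) (use u Suc.prems t \<rho>_pos K1 in \<open>auto simp: admissible_controls_def\<close>)
      also have "\<dots> \<le> (D * Q + C) * A"
        using zb A0 by (simp add: C_def A_def)
      also have "\<dots> \<le> (D * c ^ L1 + C) * A * Pq ^ E'"
      proof -
        have "D * Q + C \<le> (D * c ^ L1 + C) * Pq ^ E'"
          using PqE[of E'] C0 D0 by (simp add: Q_def algebra_simps mult_le_cancel_left1)
        then show ?thesis using A0 by (simp add: mult.commute mult.left_commute)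
      qed
      also have "\<dots> \<le> cc (Suc n) * Pq ^ E'"
        using PqE[of E'] by (intro mult_right_mono) (auto simp: cc_def c_def)
      finally show "norm (xs (Suc (Suc n)) t) \<le> cc (Suc n) * P y (Suc (Suc n)) ^ EE (Suc n)"
        by (simp add: Pq_def E'_def E_def EE_def)
    qed
  qed
  define KK where "KK i = {js. set js \<subseteq> {0, EE (i - 1)} \<and> length js = i - 1}" for i
  define \<alpha> where "\<alpha> i (js :: nat list) = cc (i - 1)" for i js
  show ?thesis
  proof (intro exI conjI ballI allI impI)
    show "0 < cc 0" using cc1[of 0] by simp
  next
    fix i assume "i \<in> {2..T}"
    show "finite (KK i)" unfolding KK_def by (rule finite_lists_length_eq) simp
  next
    fix i js assume "i \<in> {2..T}" "js \<in> KK i"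
    then show "length js = i - 1" "0 < \<alpha> i js" using cc1[of "i - 1"] by (auto simp: KK_def \<alpha>_def)
  next
    fix u and y :: "nat \<Rightarrow> 'y" and xs and t :: real assume u: "u \<in> admissible_controls T \<rho>" and hs: "hybrid_solution f g T x0 u y xs"
      and t: "t \<in> {0..1}"
    show "norm (xs 1 t) \<le> cc 0"
      using main[OF u hs, of 0] T_pos t by (simp add: P_def EE_def)
  next
    fix u and y :: "nat \<Rightarrow> 'y" and xs i and t :: real assume u: "u \<in> admissible_controls T \<rho>" and hs: "hybrid_solution f g T x0 u y xs"
      and i: "i \<in> {2..T}" and t: "t \<in> {real i - 1..real i}"
    obtain n where ni: "i = Suc n" using i by (cases i) auto
    have "norm (xs i t) \<le> cc n * P y i ^ EE n"
      using main[OF u hs, of n] ni i t by auto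
    define js0 where "js0 = map (\<lambda>m. if 1 \<le> norm (y m) then EE n else 0) [1..<i]"
    have js0K: "js0 \<in> KK i" by (auto simp: KK_def js0_def ni)
    have "(\<Prod>m\<in>{1..i - 1}. norm (y m) ^ (js0 ! (m - 1))) = (\<Prod>m\<in>{1..i - 1}. max 1 (norm (y m)) ^ EE n)"
    proof (rule prod.cong)
      fix m assume m: "m \<in> {1..i - 1}"
      then have "js0 ! (m - 1) = (if 1 \<le> norm (y m) then EE n else 0)"
      proof -
        have "m - 1 < length [1..<i]" "[1..<i] ! (m - 1) = m" using m ni by (auto simp del: upt_Suc simp add: nth_upt)
        then show ?thesis unfolding js0_def by (simp only: nth_map)
      qed
      then show "norm (y m) ^ (js0 ! (m - 1)) = max 1 (norm (y m)) ^ EE n" by auto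
    qed simp
    also have "\<dots> = P y i ^ EE n" by (simp add: P_def prod_power_distrib)
    finally have eq: "\<alpha> i js0 * (\<Prod>m\<in>{1..i - 1}. norm (y m) ^ (js0 ! (m - 1))) = cc n * P y i ^ EE n"
      by (simp add: \<alpha>_def ni)
    have "\<alpha> i js0 * (\<Prod>m\<in>{1..i - 1}. norm (y m) ^ (js0 ! (m - 1)))
        \<le> (\<Sum>js\<in>KK i. \<alpha> i js * (\<Prod>m\<in>{1..i - 1}. norm (y m) ^ (js ! (m - 1))))"
    proof (rule member_le_sum[OF js0K])
      fix js assume "js \<in> KK i - {js0}"
      have "0 \<le> \<alpha> i js" using cc1[of "i - 1"] by (simp add: \<alpha>_def)
      then show "0 \<le> \<alpha> i js * (\<Prod>m\<in>{1..i - 1}. norm (y m) ^ (js ! (m - 1)))"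
        by (intro mult_nonneg_nonneg prod_nonneg) auto
    next
      show "finite (KK i)" unfolding KK_def by (rule finite_lists_length_eq) simp
    qed
    with eq \<open>norm (xs i t) \<le> cc n * P y i ^ EE n\<close>
    show "norm (xs i t) \<le> (\<Sum>js\<in>KK i. \<alpha> i js * (\<Prod>m\<in>{1..i - 1}. norm (y m) ^ (js ! (m - 1))))"
      by linarith
  qed
qed

end
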